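(* Let $m>1$ be odd, $a=\frac{m+1}2$, $\bar i=m+1-i$ for $i\in[m]$, and $\kappa=\frac{m^2-1}2$. A set $S\subseteq O_m$ is valid if and only if all of the following hold: (1) $\{(i,j)\in O_m:(i<j\text{ and }i<\bar j)\text{ or }(i>j\text{ and }i>\bar j)\}\subseteq S$; (2) $\{(i,j)\in O_m:(i>j\text{ and }i<\bar j)\text{ or }(i<j\text{ and }i>\bar j)\}\cap S=\emptyset$; (3) for each $1\le i\le\frac{m-1}2$ exactly one of the following holds: (a) $\{(i,i),(\bar i,\bar i)\}\subseteq S$ and $\{(i,\bar i),(\bar i,i)\}\cap S=\emptyset$; (b) $\{(i,\bar i),(\bar i,i)\}\subseteq S$ and $\{(i,i),(\bar i,\bar i)\}\cap S=\emptyset$. In particular there are exactly $2^{(m-1)/2}$ valid sets.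
   Context: $O_m=([m]\times[m])\setminus\{(a,a)\}$. Let $\tau:O_m\to O_m$, $\tau(i,j)=(j,\bar i)$, extended to subsets elementwise, and $\iota(S)=O_m\setminus S$ for $S\subseteq O_m$. A subset $S\subseteq O_m$ is valid if (i) $|S|=\kappa$, (ii) $\tau(S)=\iota(S)$, and (iii) for every $i\in[m]$, $|\{j:(i,j)\in S\}|=|i-\bar i|$. *)

theory Defs
  imports Main
begin

definition bar :: "nat \<Rightarrow> nat \<Rightarrow> nat" where
  "bar m i = m + 1 - i"

definition centre :: "nat \<Rightarrow> nat" where
  "centre m = (m + 1) div 2"

definition kappa :: "nat \<Rightarrow> nat" where
  "kappa m = (m^2 - 1) div 2"

definition Om :: "nat \<Rightarrow> (nat \<times> nat) set" where
  "Om m = ({1..m} \<times> {1..m}) - {(centre m, centre m)}"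

definition tau :: "nat \<Rightarrow> nat \<times> nat \<Rightarrow> nat \<times> nat" where
  "tau m p = (snd p, bar m (fst p))"

definition iota :: "nat \<Rightarrow> (nat \<times> nat) set \<Rightarrow> (nat \<times> nat) set" where
  "iota m S = Om m - S"

definition valid :: "nat \<Rightarrow> (nat \<times> nat) set \<Rightarrow> bool" where
  "valid m S \<longleftrightarrow> S \<subseteq> Om m \<and> card S = kappa m \<and> tau m ` S = iota m S \<and>
     (\<forall>i\<in>{1..m}. int (card {j. (i, j) \<in> S}) = \<bar>int i - int (bar m i)\<bar>)"

end

theory Submission imports Defs begin

lemma Om_iff: "(i,j) \<in> Om (2*h+1) \<longleftrightarrow> 1\<le>i \<and> i\<le>2*h+1 \<and> 1\<le>j \<and> j\<le>2*h+1 \<and> \<not>(i=h+1 \<and> j=h+1)"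
  by (auto simp: Om_def centre_def)

lemma bar_h: "bar (2*h+1) i = 2*h+2-i" by (simp add: bar_def)
lemma tau_h: "tau (2*h+1) (i,j) = (j, 2*h+2-i)" by (simp add: tau_def bar_def)
lemma tau_h': "tau (Suc (2*h)) (i,j) = (j, 2*h+2-i)" by (simp add: tau_def bar_def)
lemma Om_iff': "(i,j) \<in> Om (Suc (2*h)) \<longleftrightarrow> 1\<le>i \<and> i\<le>2*h+1 \<and> 1\<le>j \<and> j\<le>2*h+1 \<and> \<not>(i=h+1 \<and> j=h+1)"
  using Om_iff[of i j h] by simp
lemma bar_h': "bar (Suc (2*h)) i = 2*h+2-i" by (simp add: bar_def)
lemmas hs = bar_h bar_h' Om_iff Om_iff' tau_h tau_h' 

definition ALT :: "nat \<Rightarrow> (nat\<times>nat) set \<Rightarrow> bool" where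
  "ALT h S \<longleftrightarrow> (\<forall>i j. (i,j) \<in> Om (2*h+1) \<longrightarrow> ((i,j)\<in>S \<longleftrightarrow> (j, 2*h+2-i) \<notin> S))"

lemma alt:
  assumes S: "S \<subseteq> Om (2*h+1)"
  shows "tau (2*h+1) ` S = iota (2*h+1) S \<longleftrightarrow> ALT h S"
proof
  assume L: "tau (2*h+1) ` S = iota (2*h+1) S"
  show "ALT h S" unfolding ALT_def
  proof (intro allI impI)
    fix i j assume ij: "(i,j) \<in> Om (2*h+1)"
    show "(i,j)\<in>S \<longleftrightarrow> (j, 2*h+2-i) \<notin> S"
    proof
      assume "(i,j)\<in>S"
      then have "tau (2*h+1) (i,j) \<in> iota (2*h+1) S" using L by blast
      then show "(j, 2*h+2-i) \<notin> S" by (simp add: hs iota_def)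
    next
      assume nS: "(j, 2*h+2-i) \<notin> S"
      have "(j, 2*h+2-i) \<in> Om (2*h+1)" using ij by (auto simp: hs)
      then have "(j, 2*h+2-i) \<in> tau (2*h+1) ` S" using L nS by (simp add: iota_def)
      then obtain a b where ab: "(a,b) \<in> S" "(j, 2*h+2-i) = (b, 2*h+2-a)"
        by (auto simp: hs)
      have "(a,b) \<in> Om (2*h+1)" using ab S by blast
      then have "a = i" using ab ij by (auto simp: hs)
      then show "(i,j)\<in>S" using ab by auto
    qed
  qed
next
  assume R: "ALT h S"
  show "tau (2*h+1) ` S = iota (2*h+1) S"
  proof (intro equalityI subsetI)
    fix x assume "x \<in> tau (2*h+1) ` S"
    then obtain i j where ij: "(i,j)\<in>S" "x = (j, 2*h+2-i)" by (auto simp: hs)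
    have "(i,j) \<in> Om (2*h+1)" using ij S by blast
    then show "x \<in> iota (2*h+1) S" using R ij unfolding ALT_def iota_def
      by (auto simp: hs)
  next
    fix x assume x: "x \<in> iota (2*h+1) S"
    obtain i j where xij: "x = (i,j)" by fastforce
    have ij: "(i,j) \<in> Om (2*h+1)" "(i,j) \<notin> S" using x xij by (auto simp: iota_def)
    have q: "(2*h+2-j, i) \<in> Om (2*h+1)" using ij by (auto simp: hs)
    have "2*h+2-(2*h+2-j) = j" using ij by (auto simp: hs)
    then have "(2*h+2-j, i) \<in> S" using R q ij unfolding ALT_def by metis
    moreover have "tau (2*h+1) (2*h+2-j, i) = x" using ij xij by (auto simp: hs Om_iff)
    ultimately show "x \<in> tau (2*h+1) ` S" by (metis image_eqI)
  qed
qed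

lemma card_Om: "card (Om (2*h+1)) = (2*h+1)^2 - 1"
proof -
  have "card ({1..2*h+1} \<times> {1..2*h+1}) = (2*h+1)^2" by (simp add: power2_eq_square)
  moreover have "(centre (2*h+1), centre (2*h+1)) \<in> {1..2*h+1} \<times> {1..2*h+1}" by (simp add: centre_def)
  ultimately show ?thesis unfolding Om_def by (simp add: card_Diff_singleton)
qed

lemma tau_inj: "inj_on (tau (2*h+1)) (Om (2*h+1))"
  by (auto simp: inj_on_def tau_def bar_def hs)

lemma card_from_alt:
  assumes S: "S \<subseteq> Om (2*h+1)" and L: "tau (2*h+1) ` S = iota (2*h+1) S"
  shows "card S = kappa (2*h+1)"
proof -
  have f: "finite (Om (2*h+1))" by (simp add: Om_def)
  have "card S = card (tau (2*h+1) ` S)" using tau_inj S by (metis card_image inj_on_subset)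
  also have "\<dots> = card (Om (2*h+1)) - card S" using L S f by (simp add: iota_def card_Diff_subset finite_subset)
  finally have "2 * card S = (2*h+1)^2 - 1" using card_Om[of h] card_mono[OF f S] by linarith
  then show ?thesis unfolding kappa_def by simp
qed

lemma nec_top:
  assumes S: "S \<subseteq> Om (2*h+1)" and A: "ALT h S"
    and rows: "\<And>i. 1\<le>i \<Longrightarrow> i\<le>h \<Longrightarrow> card {j. (i,j)\<in>S} = 2*h+2-2*i"
  shows "k \<le> h \<Longrightarrow> 1 \<le> k \<Longrightarrow> k<j \<Longrightarrow> j < 2*h+2-k \<Longrightarrow> (k,j)\<in>S"
proof (induction k arbitrary: j rule: less_induct)
  case (less k)
  define R where "R = {j. (k,j)\<in>S}"
  define I where "I = {k<..<2*h+2-k}"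
  have out: "x \<in> I \<union> {k, 2*h+2-k}" if xR: "x \<in> R" for x
  proof (rule ccontr)
    assume nx: "x \<notin> I \<union> {k, 2*h+2-k}"
    have kx: "(k,x) \<in> S" using xR R_def by simp
    then have xO: "(k,x) \<in> Om (2*h+1)" using S by blast
    then have x1: "1 \<le> x" "x \<le> 2*h+1" by (auto simp: hs)
    show False
    proof (cases "x < k")
      case True
      have "(x, 2*h+2-k) \<in> S" using less.IH[of x "2*h+2-k"] True less.prems x1 by simp
      then show False using A xO kx unfolding ALT_def by blast
    next
      case False
      then have xg: "x > 2*h+2-k" using nx I_def by auto
      define y where "y = 2*h+2-x"
      have "(y, k) \<in> S" using less.IH[of y k] xg less.prems x1 y_def by simp
      moreover have "(y,k) \<in> Om (2*h+1)" using xg less.prems x1 y_def by (auto simp: hs)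
      moreover have "2*h+2-y = x" using x1 y_def by simp
      ultimately show False using A kx unfolding ALT_def by metis
    qed
  qed
  have kO: "(k,k) \<in> Om (2*h+1)" using less.prems by (auto simp: hs)
  have corner: "k \<in> R \<longleftrightarrow> 2*h+2-k \<notin> R" using A kO unfolding ALT_def R_def by blast
  define c where "c = (if k \<in> R then k else 2*h+2-k)"
  have cR: "c \<in> R" using corner c_def by auto
  have cI: "c \<notin> I" using c_def I_def by auto
  have Req: "R = insert c (R \<inter> I)"
    using out cR corner c_def by auto
  have fI: "finite I" using I_def by simp
  have "card R = Suc (card (R \<inter> I))" using Req cI fI
    by (metis IntE card_insert_disjoint finite_Int)
  moreover have "card R = 2*h+2-2*k" using rows less.prems R_def by simp
  moreover have "card I = 2*h+1-2*k" using I_def less.prems by simp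
  ultimately have "card (R \<inter> I) = card I" by simp
  then have "R \<inter> I = I" using fI by (simp add: card_subset_eq)
  moreover have "j \<in> I" using I_def less.prems by simp
  ultimately show ?case using R_def by blast
qed

definition P1 where "P1 h S \<longleftrightarrow> (\<forall>i j. (i,j)\<in>Om (2*h+1) \<and> ((i<j \<and> i<2*h+2-j) \<or> (i>j \<and> i>2*h+2-j)) \<longrightarrow> (i,j)\<in>S)"
definition P2 where "P2 h S \<longleftrightarrow> (\<forall>i j. (i,j)\<in>Om (2*h+1) \<and> ((i>j \<and> i<2*h+2-j) \<or> (i<j \<and> i>2*h+2-j)) \<longrightarrow> (i,j)\<notin>S)"
definition P3 where "P3 h S \<longleftrightarrow> (\<forall>i. 1\<le>i \<and> i\<le>h \<longrightarrow>
   ((i,i)\<in>S \<and> (2*h+2-i,2*h+2-i)\<in>S \<and> (i,2*h+2-i)\<notin>S \<and> (2*h+2-i,i)\<notin>S) \<or>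
   ((i,i)\<notin>S \<and> (2*h+2-i,2*h+2-i)\<notin>S \<and> (i,2*h+2-i)\<in>S \<and> (2*h+2-i,i)\<in>S))"

lemma nec:
  assumes S: "S \<subseteq> Om (2*h+1)" and V: "valid (2*h+1) S"
  shows "P1 h S \<and> P2 h S \<and> P3 h S"
proof -
  have A: "ALT h S" using V S alt unfolding valid_def by blast
  have rows: "card {j. (i,j)\<in>S} = 2*h+2-2*i" if "1\<le>i" "i\<le>h" for i
  proof -
    have "int (card {j. (i,j)\<in>S}) = \<bar>int i - int (bar (2*h+1) i)\<bar>"
      using V that unfolding valid_def by auto
    then show ?thesis using that by (simp add: bar_def)
  qed
  note T = nec_top[OF S A rows]
  have p1: "P1 h S" unfolding P1_def
  proof (intro allI impI)
    fix i j assume a: "(i,j)\<in>Om (2*h+1) \<and> ((i<j \<and> i<2*h+2-j) \<or> (i>j \<and> i>2*h+2-j))"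
    then have ij: "1\<le>i" "i\<le>2*h+1" "1\<le>j" "j\<le>2*h+1" by (auto simp: hs)
    show "(i,j)\<in>S"
    proof (cases "i<j \<and> i<2*h+2-j")
      case True
      have "i \<le> h" "j < 2*h+2-i" using True ij by linarith+
      then show ?thesis using T[of i j] ij True by simp
    next
      case False
      then have c: "i>j \<and> i>2*h+2-j" using a by blast
      define i' where "i' = 2*h+2-i"
      define j' where "j' = 2*h+2-j"
      have "i' \<le> h" "1 \<le> i'" "i' < j'" "j' < 2*h+2-i'" using c ij i'_def j'_def by linarith+
      then have "(i',j') \<in> S" using T[of i' j'] by blast
      moreover have "(i',j') \<in> Om (2*h+1)" "(j',i) \<in> Om (2*h+1)" using c ij i'_def j'_def by (auto simp: hs)
      moreover have "2*h+2-i' = i" "2*h+2-j' = j" using ij i'_def j'_def by auto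
      ultimately show ?thesis using A unfolding ALT_def by metis
    qed
  qed
  have p2: "P2 h S" unfolding P2_def
  proof (intro allI impI)
    fix i j assume a: "(i,j)\<in>Om (2*h+1) \<and> ((i>j \<and> i<2*h+2-j) \<or> (i<j \<and> i>2*h+2-j))"
    then have ij: "1\<le>i" "i\<le>2*h+1" "1\<le>j" "j\<le>2*h+1" by (auto simp: hs)
    show "(i,j)\<notin>S"
    proof (cases "i>j \<and> i<2*h+2-j")
      case True
      have "j \<le> h" "1 \<le> j" "j < 2*h+2-i" "2*h+2-i < 2*h+2-j" using ij True by linarith+
      then have "(j, 2*h+2-i) \<in> S" using T[of j "2*h+2-i"] by blast
      then show ?thesis using A a unfolding ALT_def by blast
    next
      case False
      then have c: "i<j \<and> i>2*h+2-j" using a by blast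
      define j0 where "j0 = 2*h+2-j"
      have "j0 \<le> h" "1 \<le> j0" "j0 < i" "i < 2*h+2-j0" using c ij j0_def by linarith+
      then have "(j0,i) \<in> S" using T[of j0 i] by blast
      moreover have "(j0,i) \<in> Om (2*h+1)" using c ij j0_def by (auto simp: hs)
      moreover have "2*h+2-j0 = j" using ij j0_def by auto
      ultimately show ?thesis using A unfolding ALT_def by metis
    qed
  qed
  have p3: "P3 h S" unfolding P3_def
  proof (intro allI impI)
    fix i assume i: "1\<le>i \<and> i\<le>h"
    have O: "(i,i) \<in> Om (2*h+1)" "(i,2*h+2-i) \<in> Om (2*h+1)" "(2*h+2-i,2*h+2-i) \<in> Om (2*h+1)"
      "(2*h+2-i,i) \<in> Om (2*h+1)" using i by (auto simp: hs)
    have e: "2*h+2-(2*h+2-i) = i" using i by simp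
    show "((i,i)\<in>S \<and> (2*h+2-i,2*h+2-i)\<in>S \<and> (i,2*h+2-i)\<notin>S \<and> (2*h+2-i,i)\<notin>S) \<or>
   ((i,i)\<notin>S \<and> (2*h+2-i,2*h+2-i)\<notin>S \<and> (i,2*h+2-i)\<in>S \<and> (2*h+2-i,i)\<in>S)"
      using A O e unfolding ALT_def by metis
  qed
  show ?thesis using p1 p2 p3 by blast
qed

lemma suf_alt:
  assumes S: "S \<subseteq> Om (2*h+1)" and p: "P1 h S" "P2 h S" "P3 h S"
  shows "ALT h S"
  unfolding ALT_def
proof (intro allI impI)
  fix i j assume ij: "(i,j) \<in> Om (2*h+1)"
  then have r: "1\<le>i" "i\<le>2*h+1" "1\<le>j" "j\<le>2*h+1" "\<not>(i=h+1 \<and> j=h+1)" by (auto simp: hs)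
  have jO: "(j, 2*h+2-i) \<in> Om (2*h+1)" using r by (auto simp: hs)
  note q1 = p(1)[unfolded P1_def, rule_format]
  note q2 = p(2)[unfolded P2_def, rule_format]
  note q3 = p(3)[unfolded P3_def, rule_format]
  show "(i,j)\<in>S \<longleftrightarrow> (j, 2*h+2-i) \<notin> S"
  proof (cases "(i<j \<and> i<2*h+2-j) \<or> (i>j \<and> i>2*h+2-j)")
    case True
    have c2: "(j>2*h+2-i \<and> j<2*h+2-(2*h+2-i)) \<or> (j<2*h+2-i \<and> j>2*h+2-(2*h+2-i))" using True r by arith
    have "(j, 2*h+2-i) \<notin> S" using q2[of j "2*h+2-i"] jO c2 by blast
    then show ?thesis using q1[of i j] ij True by auto
  next
    case F1: False
    show ?thesis
    proof (cases "(i>j \<and> i<2*h+2-j) \<or> (i<j \<and> i>2*h+2-j)")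
      case True
      have c2: "(j<2*h+2-i \<and> j<2*h+2-(2*h+2-i)) \<or> (j>2*h+2-i \<and> j>2*h+2-(2*h+2-i))" using True r by arith
      have "(j, 2*h+2-i) \<in> S" using q1[of j "2*h+2-i"] jO c2 by blast
      then show ?thesis using q2[of i j] ij True by auto
    next
      case False
      then have d: "j = i \<or> j = 2*h+2-i" using F1 r by linarith
      show ?thesis
      proof (cases "i \<le> h")
        case True
        then show ?thesis using q3[of i] d r by auto
      next
        case False
        then have "i \<ge> h+2" using d r by auto
        then have "1 \<le> 2*h+2-i" "2*h+2-i \<le> h" "2*h+2-(2*h+2-i) = i" using r by auto
        then show ?thesis using q3[of "2*h+2-i"] d r by auto
      qed
    qed
  qed
qed

lemma suf_rows:
  assumes S: "S \<subseteq> Om (2*h+1)" and p: "P1 h S" "P2 h S" "P3 h S"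
    and i: "1 \<le> i" "i \<le> 2*h+1"
  shows "int (card {j. (i,j)\<in>S}) = \<bar>int i - int (2*h+2-i)\<bar>"
proof -
  note q1 = p(1)[unfolded P1_def, rule_format]
  note q2 = p(2)[unfolded P2_def, rule_format]
  note q3 = p(3)[unfolded P3_def, rule_format]
  have inO: "(i,j)\<in>S \<Longrightarrow> 1\<le>j \<and> j\<le>2*h+1" for j using S by (auto simp: hs)
  consider (lo) "i \<le> h" | (mid) "i = h+1" | (hi) "i \<ge> h+2" by linarith
  then show ?thesis
  proof cases
    case lo
    define c where "c = (if (i,i)\<in>S then i else 2*h+2-i)"
    have "{j. (i,j)\<in>S} = insert c {i<..<2*h+2-i}"
    proof (intro set_eqI iffI)
      fix j assume "j \<in> {j. (i,j)\<in>S}"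
      then have ijS: "(i,j)\<in>S" by simp
      then have jr: "1\<le>j" "j\<le>2*h+1" using inO by auto
      have "(i,j) \<in> Om (2*h+1)" using ijS S by blast
      moreover have "\<not> ((i>j \<and> i<2*h+2-j) \<or> (i<j \<and> i>2*h+2-j))" using q2[of i j] ijS calculation by blast
      then have "j = i \<or> j = 2*h+2-i \<or> j \<in> {i<..<2*h+2-i}" using lo i jr by auto
      then show "j \<in> insert c {i<..<2*h+2-i}"
        using q3[of i] ijS lo i c_def by auto
    next
      fix j assume "j \<in> insert c {i<..<2*h+2-i}"
      moreover have "(i,j) \<in> Om (2*h+1)" if "j \<in> {i<..<2*h+2-i}" using that i lo by (auto simp: hs)
      moreover have "(i<j \<and> i<2*h+2-j)" if "j \<in> {i<..<2*h+2-i}" using that i lo by auto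
      ultimately show "j \<in> {j. (i,j)\<in>S}" using q1[of i j] q3[of i] lo i c_def by auto
    qed
    moreover have "c \<notin> {i<..<2*h+2-i}" using c_def by auto
    ultimately have "card {j. (i,j)\<in>S} = Suc (2*h+2-i - Suc i)" by simp
    then show ?thesis using lo i by simp
  next
    case mid
    have "{j. (i,j)\<in>S} = {}"
    proof (intro set_eqI iffI)
      fix j assume "j \<in> {j. (i,j)\<in>S}"
      then have ijS: "(i,j)\<in>S" by simp
      then have "(i,j) \<in> Om (2*h+1)" using S by blast
      moreover have "(i>j \<and> i<2*h+2-j) \<or> (i<j \<and> i>2*h+2-j)" using calculation mid by (auto simp: hs)
      ultimately show "j \<in> {}" using q2[of i j] ijS by blast
    qed simp
    then show ?thesis using mid by simp
  next
    case hi
    define c where "c = (if (i,i)\<in>S then i else 2*h+2-i)"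
    define k where "k = 2*h+2-i"
    have k: "1 \<le> k" "k \<le> h" "2*h+2-k = i" using hi i k_def by auto
    have "{j. (i,j)\<in>S} = insert c {k<..<i}"
    proof (intro set_eqI iffI)
      fix j assume "j \<in> {j. (i,j)\<in>S}"
      then have ijS: "(i,j)\<in>S" by simp
      then have jr: "1\<le>j" "j\<le>2*h+1" using inO by auto
      have "(i,j) \<in> Om (2*h+1)" using ijS S by blast
      moreover have "\<not> ((i>j \<and> i<2*h+2-j) \<or> (i<j \<and> i>2*h+2-j))" using q2[of i j] ijS calculation by blast
      then have "j = i \<or> j = k \<or> j \<in> {k<..<i}" using hi i jr k_def by auto
      then show "j \<in> insert c {k<..<i}"
        using q3[of k] ijS k c_def k_def by auto
    next
      fix j assume "j \<in> insert c {k<..<i}"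
      moreover have "(i,j) \<in> Om (2*h+1)" if "j \<in> {k<..<i}" using that i hi k_def by (auto simp: hs)
      moreover have "(i>j \<and> i>2*h+2-j)" if "j \<in> {k<..<i}" using that i k_def by auto
      ultimately show "j \<in> {j. (i,j)\<in>S}" using q1[of i j] q3[of k] hi i c_def k k_def by auto
    qed
    moreover have "c \<notin> {k<..<i}" using c_def k_def by auto
    ultimately have "card {j. (i,j)\<in>S} = Suc (i - Suc k)" by simp
    then show ?thesis using hi i k_def by simp
  qed
qed

lemma suf:
  assumes S: "S \<subseteq> Om (2*h+1)" and p: "P1 h S" "P2 h S" "P3 h S"
  shows "valid (2*h+1) S"
proof -
  have A: "tau (2*h+1) ` S = iota (2*h+1) S" using alt[OF S] suf_alt[OF S p] by blast
  show ?thesis unfolding valid_def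
    using S A card_from_alt[OF S A] suf_rows[OF S p] by (simp add: hs)
qed

lemma determined:
  assumes S: "S \<subseteq> Om (2*h+1)" and p: "P1 h S" "P2 h S" "P3 h S"
    and ij: "(i,j) \<in> Om (2*h+1)"
  shows "(i,j) \<in> S \<longleftrightarrow>
    (if (i<j \<and> i<2*h+2-j) \<or> (i>j \<and> i>2*h+2-j) then True
     else if (i>j \<and> i<2*h+2-j) \<or> (i<j \<and> i>2*h+2-j) then False
     else (((if i \<le> h then i else 2*h+2-i), (if i \<le> h then i else 2*h+2-i)) \<in> S \<longleftrightarrow> i = j))"
proof -
  note q1 = p(1)[unfolded P1_def, rule_format]
  note q2 = p(2)[unfolded P2_def, rule_format]
  note q3 = p(3)[unfolded P3_def, rule_format]
  have r: "1\<le>i" "i\<le>2*h+1" "1\<le>j" "j\<le>2*h+1" "\<not>(i=h+1 \<and> j=h+1)" using ij by (auto simp: hs)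
  show ?thesis
  proof (cases "(i<j \<and> i<2*h+2-j) \<or> (i>j \<and> i>2*h+2-j)")
    case True then show ?thesis using q1 ij by auto
  next
    case F1: False
    show ?thesis
    proof (cases "(i>j \<and> i<2*h+2-j) \<or> (i<j \<and> i>2*h+2-j)")
      case True then show ?thesis using q2 ij F1 by auto
    next
      case False
      then have d: "j = i \<or> j = 2*h+2-i" using F1 r by linarith
      show ?thesis
      proof (cases "i \<le> h")
        case True
        then show ?thesis using q3[of i] d r F1 False by auto
      next
        case False
        then have "i \<ge> h+2" using d r by auto
        then have "1 \<le> 2*h+2-i" "2*h+2-i \<le> h" "2*h+2-(2*h+2-i) = i" "2*h+2-i \<noteq> i" using r by auto
        then show ?thesis using q3[of "2*h+2-i"] d r F1 \<open>\<not> i \<le> h\<close> by auto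
      qed
    qed
  qed
qed

lemma unique:
  assumes S1: "S1 \<subseteq> Om (2*h+1)" and p1: "P1 h S1" "P2 h S1" "P3 h S1"
    and S2: "S2 \<subseteq> Om (2*h+1)" and p2: "P1 h S2" "P2 h S2" "P3 h S2"
    and agree: "\<And>k. 1 \<le> k \<Longrightarrow> k \<le> h \<Longrightarrow> (k,k) \<in> S1 \<longleftrightarrow> (k,k) \<in> S2"
  shows "S1 = S2"
proof (intro set_eqI)
  fix x :: "nat \<times> nat"
  obtain i j where x: "x = (i,j)" by fastforce
  show "x \<in> S1 \<longleftrightarrow> x \<in> S2"
  proof (cases "(i,j) \<in> Om (2*h+1)")
    case False then show ?thesis using S1 S2 x by blast
  next
    case True
    then have r: "1\<le>i" "i\<le>2*h+1" by (auto simp: hs)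
    have a: "((if i \<le> h then i else 2*h+2-i), (if i \<le> h then i else 2*h+2-i)) \<in> S1 \<longleftrightarrow>
             ((if i \<le> h then i else 2*h+2-i), (if i \<le> h then i else 2*h+2-i)) \<in> S2"
    proof (cases "i \<le> h")
      case True then show ?thesis using agree r by simp
    next
      case False
      show ?thesis
      proof (cases "i = h+1")
        case True
        have "(h+1,h+1) \<notin> Om (2*h+1)" by (simp add: hs)
        then show ?thesis using True S1 S2 by auto
      next
        case False
        then show ?thesis using agree[of "2*h+2-i"] r \<open>\<not> i \<le> h\<close> by simp
      qed
    qed
    show ?thesis using determined[OF S1 p1 True] determined[OF S2 p2 True] a x by simp
  qed
qed

definition ST :: "nat \<Rightarrow> nat set \<Rightarrow> (nat\<times>nat) set" where
  "ST h T = {(i,j). (i,j) \<in> Om (2*h+1) \<and> ((i<j \<and> i<2*h+2-j) \<or> (i>j \<and> i>2*h+2-j))}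
     \<union> (\<lambda>k. (k,k)) ` T \<union> (\<lambda>k. (2*h+2-k,2*h+2-k)) ` T
     \<union> (\<lambda>k. (k,2*h+2-k)) ` ({1..h}-T) \<union> (\<lambda>k. (2*h+2-k,k)) ` ({1..h}-T)"

lemma ST_mem:
  assumes T: "T \<subseteq> {1..h}"
  shows "(i,j) \<in> ST h T \<longleftrightarrow> ((i,j) \<in> Om (2*h+1) \<and> ((i<j \<and> i<2*h+2-j) \<or> (i>j \<and> i>2*h+2-j)))
     \<or> (i = j \<and> (i \<in> T \<or> (h+2 \<le> i \<and> i \<le> 2*h+1 \<and> 2*h+2-i \<in> T)))
     \<or> (j = 2*h+2-i \<and> ((1\<le>i \<and> i\<le>h \<and> i\<notin>T) \<or> (h+2\<le>i \<and> i\<le>2*h+1 \<and> 2*h+2-i \<notin> T)))"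
  (is "?L \<longleftrightarrow> ?R")
proof
  assume ?L
  then consider (a) "(i,j) \<in> Om (2*h+1) \<and> ((i<j \<and> i<2*h+2-j) \<or> (i>j \<and> i>2*h+2-j))"
    | (b) "(i,j) \<in> (\<lambda>k. (k,k)) ` T" | (c) "(i,j) \<in> (\<lambda>k. (2*h+2-k,2*h+2-k)) ` T"
    | (d) "(i,j) \<in> (\<lambda>k. (k,2*h+2-k)) ` ({1..h}-T)" | (e) "(i,j) \<in> (\<lambda>k. (2*h+2-k,k)) ` ({1..h}-T)"
    unfolding ST_def by blast
  then show ?R
  proof cases
    case a then show ?thesis by blast
  next
    case b then show ?thesis by blast
  next
    case c
    then obtain k where k: "k \<in> T" "i = 2*h+2-k" "j = 2*h+2-k" by blast
    have "1 \<le> k" "k \<le> h" using k T by auto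
    then have "i = j \<and> h+2 \<le> i \<and> i \<le> 2*h+1 \<and> 2*h+2-i \<in> T" using k by auto
    then show ?thesis by blast
  next
    case d
    then obtain k where k: "k \<in> {1..h}" "k \<notin> T" "i = k" "j = 2*h+2-k" by blast
    then show ?thesis by auto
  next
    case e
    then obtain k where k: "k \<in> {1..h}" "k \<notin> T" "i = 2*h+2-k" "j = k" by blast
    then have "j = 2*h+2-i \<and> h+2\<le>i \<and> i\<le>2*h+1 \<and> 2*h+2-i \<notin> T" by auto
    then show ?thesis by blast
  qed
next
  assume r: ?R
  show ?L
  proof -
    { assume a: "i = j" "h+2 \<le> i" "i \<le> 2*h+1" "2*h+2-i \<in> T"
      have "(i,j) \<in> (\<lambda>k. (2*h+2-k,2*h+2-k)) ` T" using a by (intro image_eqI[where x="2*h+2-i"]) auto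
      then have ?L unfolding ST_def by blast }
    moreover
    { assume a: "j = 2*h+2-i" "1\<le>i" "i\<le>h" "i\<notin>T"
      have "(i,j) \<in> (\<lambda>k. (k,2*h+2-k)) ` ({1..h}-T)" using a by (intro image_eqI[where x="i"]) auto
      then have ?L unfolding ST_def by blast }
    moreover
    { assume a: "j = 2*h+2-i" "h+2\<le>i" "i\<le>2*h+1" "2*h+2-i \<notin> T"
      have "(i,j) \<in> (\<lambda>k. (2*h+2-k,k)) ` ({1..h}-T)" using a by (intro image_eqI[where x="2*h+2-i"]) auto
      then have ?L unfolding ST_def by blast }
    ultimately show ?L using r unfolding ST_def by blast
  qed
qed

lemma ST_Om: assumes T: "T \<subseteq> {1..h}" shows "ST h T \<subseteq> Om (2*h+1)"
proof
  fix x :: "nat\<times>nat" assume x: "x \<in> ST h T"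
  obtain i j where ij: "x = (i,j)" by fastforce
  show "x \<in> Om (2*h+1)" using x ij ST_mem[OF T, of i j] T by (auto simp: hs)
qed

lemma ST_diag: assumes T: "T \<subseteq> {1..h}" shows "1 \<le> k \<Longrightarrow> k \<le> h \<Longrightarrow> (k,k) \<in> ST h T \<longleftrightarrow> k \<in> T"
  using ST_mem[OF T, of k k] by auto

lemma ST_P: assumes T: "T \<subseteq> {1..h}" shows "P1 h (ST h T) \<and> P2 h (ST h T) \<and> P3 h (ST h T)"
proof -
  have "P1 h (ST h T)" unfolding P1_def using ST_mem[OF T] by blast
  moreover have "P2 h (ST h T)" unfolding P2_def
  proof (intro allI impI)
    fix i j assume a: "(i,j)\<in>Om (2*h+1) \<and> ((i>j \<and> i<2*h+2-j) \<or> (i<j \<and> i>2*h+2-j))"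
    then have "\<not>((i<j \<and> i<2*h+2-j) \<or> (i>j \<and> i>2*h+2-j))" "i \<noteq> j" "j \<noteq> 2*h+2-i" by auto
    then show "(i,j) \<notin> ST h T" using ST_mem[OF T, of i j] by blast
  qed
  moreover have "P3 h (ST h T)" unfolding P3_def
  proof (intro allI impI)
    fix i assume i: "1\<le>i \<and> i\<le>h"
    have e: "2*h+2-(2*h+2-i) = i" "i \<noteq> 2*h+2-i" "h+2 \<le> 2*h+2-i" "2*h+2-i \<le> 2*h+1" using i by auto
    show "((i,i)\<in>ST h T \<and> (2*h+2-i,2*h+2-i)\<in>ST h T \<and> (i,2*h+2-i)\<notin>ST h T \<and> (2*h+2-i,i)\<notin>ST h T) \<or>
   ((i,i)\<notin>ST h T \<and> (2*h+2-i,2*h+2-i)\<notin>ST h T \<and> (i,2*h+2-i)\<in>ST h T \<and> (2*h+2-i,i)\<in>ST h T)"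
    proof -
      have m1: "(i,i)\<in>ST h T \<longleftrightarrow> i \<in> T" using ST_mem[OF T, of i i] i by auto
      have m2: "(2*h+2-i,2*h+2-i)\<in>ST h T \<longleftrightarrow> i \<in> T"
        using ST_mem[OF T, of "2*h+2-i" "2*h+2-i"] e i T by auto
      have m3: "(i,2*h+2-i)\<in>ST h T \<longleftrightarrow> i \<notin> T"
        using ST_mem[OF T, of i "2*h+2-i"] e i T by auto
      have m4: "(2*h+2-i,i)\<in>ST h T \<longleftrightarrow> i \<notin> T"
        using ST_mem[OF T, of "2*h+2-i" i] e i T by auto
      show ?thesis using m1 m2 m3 m4 by blast
    qed
  qed
  ultimately show ?thesis by blast
qed

lemma valid_iff: "S \<subseteq> Om (2*h+1) \<Longrightarrow> valid (2*h+1) S \<longleftrightarrow> P1 h S \<and> P2 h S \<and> P3 h S"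
  using nec suf by blast

lemma count: "card {S. valid (2*h+1) S} = 2^h"
proof -
  have eq: "{S. valid (2*h+1) S} = ST h ` Pow {1..h}"
  proof (intro equalityI subsetI)
    fix S assume "S \<in> {S. valid (2*h+1) S}"
    then have V: "valid (2*h+1) S" by simp
    then have S: "S \<subseteq> Om (2*h+1)" unfolding valid_def by blast
    define T where "T = {k\<in>{1..h}. (k,k)\<in>S}"
    have T: "T \<subseteq> {1..h}" using T_def by auto
    have p: "P1 h S" "P2 h S" "P3 h S" using nec[OF S V] by auto
    have p': "P1 h (ST h T)" "P2 h (ST h T)" "P3 h (ST h T)" using ST_P[OF T] by auto
    have "S = ST h T"
      by (rule unique[OF S p ST_Om[OF T] p']) (use ST_diag[OF T] T_def in auto)
    then show "S \<in> ST h ` Pow {1..h}" using T by blast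
  next
    fix S assume "S \<in> ST h ` Pow {1..h}"
    then obtain T where T: "T \<subseteq> {1..h}" "S = ST h T" by blast
    show "S \<in> {S. valid (2*h+1) S}" using suf[OF ST_Om[OF T(1)]] ST_P[OF T(1)] T(2) by auto
  qed
  have inj: "inj_on (ST h) (Pow {1..h})"
  proof (rule inj_onI)
    fix T1 T2 assume a: "T1 \<in> Pow {1..h}" "T2 \<in> Pow {1..h}" "ST h T1 = ST h T2"
    have "k \<in> T1 \<longleftrightarrow> k \<in> T2" if "k \<in> {1..h}" for k
      using ST_diag[of T1 h k] ST_diag[of T2 h k] a that by auto
    then show "T1 = T2" using a by blast
  qed
  have "card {S. valid (2*h+1) S} = card (Pow {1..h::nat})" using eq inj by (simp add: card_image)
  also have "\<dots> = 2^h" by (simp add: card_Pow)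
  finally show ?thesis .
qed

theorem lemma6p6:
  fixes m :: nat
  assumes "odd m" and "m > 1"
  shows "(\<forall>S. S \<subseteq> Om m \<longrightarrow>
           (valid m S \<longleftrightarrow>
              {(i, j) \<in> Om m. (i < j \<and> i < bar m j) \<or> (i > j \<and> i > bar m j)} \<subseteq> S \<and>
              {(i, j) \<in> Om m. (i > j \<and> i < bar m j) \<or> (i < j \<and> i > bar m j)} \<inter> S = {} \<and>
              (\<forall>i. 1 \<le> i \<and> i \<le> (m - 1) div 2 \<longrightarrow>
                 (let A = ({(i, i), (bar m i, bar m i)} \<subseteq> S \<and> {(i, bar m i), (bar m i, i)} \<inter> S = {});
                      B = ({(i, bar m i), (bar m i, i)} \<subseteq> S \<and> {(i, i), (bar m i, bar m i)} \<inter> S = {})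
                  in (A \<and> \<not> B) \<or> (\<not> A \<and> B)))))
         \<and> card {S. valid m S} = 2 ^ ((m - 1) div 2)"
proof -
  obtain h where m: "m = 2*h+1" using assms(1) oddE by blast
  have hd: "(m - 1) div 2 = h" using m by simp
  have br: "bar m x = 2*h+2-x" for x using m by (simp add: bar_def)
  have main: "valid m S \<longleftrightarrow>
              {(i, j) \<in> Om m. (i < j \<and> i < bar m j) \<or> (i > j \<and> i > bar m j)} \<subseteq> S \<and>
              {(i, j) \<in> Om m. (i > j \<and> i < bar m j) \<or> (i < j \<and> i > bar m j)} \<inter> S = {} \<and>
              (\<forall>i. 1 \<le> i \<and> i \<le> (m - 1) div 2 \<longrightarrow>
                 (let A = ({(i, i), (bar m i, bar m i)} \<subseteq> S \<and> {(i, bar m i), (bar m i, i)} \<inter> S = {});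
                      B = ({(i, bar m i), (bar m i, i)} \<subseteq> S \<and> {(i, i), (bar m i, bar m i)} \<inter> S = {})
                  in (A \<and> \<not> B) \<or> (\<not> A \<and> B)))"
    if S: "S \<subseteq> Om m" for S
  proof -
    have e1: "{(i, j) \<in> Om m. (i < j \<and> i < bar m j) \<or> (i > j \<and> i > bar m j)} \<subseteq> S \<longleftrightarrow> P1 h S"
      unfolding P1_def m by (auto simp: hs subset_iff)
    have e2: "{(i, j) \<in> Om m. (i > j \<and> i < bar m j) \<or> (i < j \<and> i > bar m j)} \<inter> S = {} \<longleftrightarrow> P2 h S"
      unfolding P2_def m by (auto simp: hs)
    have e3: "(\<forall>i. 1 \<le> i \<and> i \<le> (m - 1) div 2 \<longrightarrow>
                 (let A = ({(i, i), (bar m i, bar m i)} \<subseteq> S \<and> {(i, bar m i), (bar m i, i)} \<inter> S = {});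
                      B = ({(i, bar m i), (bar m i, i)} \<subseteq> S \<and> {(i, i), (bar m i, bar m i)} \<inter> S = {})
                  in (A \<and> \<not> B) \<or> (\<not> A \<and> B))) \<longleftrightarrow> P3 h S"
      unfolding P3_def hd Let_def m by (auto simp: hs)
    show ?thesis using valid_iff[of S h] S e1 e2 e3 m by simp
  qed
  show ?thesis using main count[of h] m hd by simp
qed

end
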